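(* Let $A$ be a dilation, $X$ a concave ball quasi-Banach function space, $q\in[1,\infty)$, $d\in\mathbb Z_+$ and $s\in(0,1]$. Then $\mathcal L^A_{X,q,d,s}(\mathbb R^n)=\mathcal L^A_{X,q,d}(\mathbb R^n)$ with equivalent quasi-norms.
   Context: A real $n\times n$ matrix $A$ is a dilation if all its eigenvalues have modulus $>1$. Let $b:=|\det A|$. Fix an open ellipsoid $\Delta$ symmetric about the origin with $|\Delta|=1$ and $r>1$ with $\Delta\subset r\Delta\subset A\Delta$; put $B_k:=A^k\Delta$ ($k\in\mathbb Z$) and $\mathcal B:=\{x+B_k:x\in\mathbb R^n,k\in\mathbb Z\}$. Let $\mathscr M(\mathbb R^n)$ be the set of measurable functions. A quasi-normed linear space $X\subset\mathscr M(\mathbb R^n)$ whose quasi-norm is defined on all of $\mathscr M(\mathbb R^n)$ is a ball quasi-Banach function space if: (i) $\|f\|_X=0\Rightarrow f=0$ a.e.; (ii) $|g|\le|f|$ a.e. $\Rightarrow\|g\|_X\le\|f\|_X$; (iii) $0\le f_m\uparrow f$ a.e. $\Rightarrow\|f_m\|_X\uparrow\|f\|_X$; (iv) $\mathbf 1_B\in X$ for all $B\in\mathcal B$. $X$ is concave if there is $C>0$ such that $\sum_{k\in\mathbb N}\|f_k\|_X\le C\|\sum_{k\in\mathbb N}|f_k|\|_X$ for all $\{f_k\}\subset\mathscr M(\mathbb R^n)$. $\mathcal P_d$ denotes polynomials of degree $\le d$; $P^d_Bg$ is the unique $P\in\mathcal P_d$ with $\int_B(g-P)h=0$ for all $h\in\mathcal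 P_d$. $\mathcal L^A_{X,q,d,s}(\mathbb R^n)$ is the set of $f\in L^q_{\mathrm{loc}}$ with $$\|f\|_{\mathcal L^A_{X,q,d,s}}:=\sup\left\|\left\{\sum_{i=1}^m\left[\frac{\lambda_i}{\|\mathbf 1_{B^{(i)}}\|_X}\right]^s\mathbf 1_{B^{(i)}}\right\}^{1/s}\right\|_X^{-1}\sum_{j=1}^m\frac{\lambda_j|B^{(j)}|}{\|\mathbf 1_{B^{(j)}}\|_X}\left[\frac1{|B^{(j)}|}\int_{B^{(j)}}|f-P^d_{B^{(j)}}f|^q\right]^{1/q}<\infty$$ (sup over $m\in\mathbb N$, $B^{(j)}\in\mathcal B$, $\lambda_j\ge0$ with $\sum_j\lambda_j\neq0$). $\mathcal L^A_{X,q,d}(\mathbb R^n)$ is the set of $f\in L^q_{\mathrm{loc}}$ with $\|f\|_{\mathcal L^A_{X,q,d}}:=\sup_{B\in\mathcal B}\frac{|B|}{\|\mathbf 1_B\|_X}\left[\frac1{|B|}\int_B|f-P^d_Bf|^q\right]^{1/q}<\infty$. Elements are identified modulo $\mathcal P_d$. *)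

theory Defs
  imports "HOL-Analysis.Analysis"
begin

definition cmat :: "real^'n^'n \<Rightarrow> complex^'n^'n" where
  "cmat A = (\<chi> i j. complex_of_real (A $ i $ j))"

definition dilation :: "real^'n^'n \<Rightarrow> bool" where
  "dilation A \<longleftrightarrow> (\<forall>\<mu>::complex. (\<exists>v::complex^'n. v \<noteq> 0 \<and> cmat A *v v = \<mu> *s v) \<longrightarrow> 1 < cmod \<mu>)"

definition origin_ellipsoid :: "(real^'n) set \<Rightarrow> bool" where
  "origin_ellipsoid E \<longleftrightarrow> (\<exists>P::real^'n^'n. invertible P \<and> E = (\<lambda>y. P *v y) ` ball 0 1)"

definition matpow_image :: "real^'n^'n \<Rightarrow> int \<Rightarrow> (real^'n) set \<Rightarrow> (real^'n) set" where
  "matpow_image A k S =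
     (if 0 \<le> k then (((\<lambda>y. A *v y) ^^ nat k) ` S)
      else (((\<lambda>y. matrix_inv A *v y) ^^ nat (- k)) ` S))"

definition dil_balls :: "real^'n^'n \<Rightarrow> (real^'n) set \<Rightarrow> (real^'n) set set" where
  "dil_balls A \<Delta> = {(\<lambda>y. x + y) ` matpow_image A k \<Delta> | x k. True}"

text \<open>The quasi-norm N is defined on all functions (values in [0,\<infinity>]); only its values on
  Lebesgue measurable functions matter. X = {f measurable. N f < \<infinity>}.\<close>
definition ball_QBFS :: "real^'n^'n \<Rightarrow> (real^'n) set \<Rightarrow> ((real^'n \<Rightarrow> real) \<Rightarrow> ennreal) \<Rightarrow> bool" where
  "ball_QBFS A \<Delta> N \<longleftrightarrow>
     \<comment> \<open>quasi-norm: homogeneity and quasi-triangle inequality\<close>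
     (\<forall>f c. f \<in> borel_measurable lebesgue \<longrightarrow> N (\<lambda>x. c * f x) = ennreal \<bar>c\<bar> * N f) \<and>
     (\<exists>K\<ge>1. \<forall>f g. f \<in> borel_measurable lebesgue \<longrightarrow> g \<in> borel_measurable lebesgue \<longrightarrow>
         N (\<lambda>x. f x + g x) \<le> ennreal K * (N f + N g)) \<and>
     \<comment> \<open>(i)\<close>
     (\<forall>f. f \<in> borel_measurable lebesgue \<longrightarrow> N f = 0 \<longrightarrow> (AE x in lebesgue. f x = 0)) \<and>
     \<comment> \<open>(ii)\<close>
     (\<forall>f g. f \<in> borel_measurable lebesgue \<longrightarrow> g \<in> borel_measurable lebesgue \<longrightarrow>
         (AE x in lebesgue. \<bar>g x\<bar> \<le> \<bar>f x\<bar>) \<longrightarrow> N g \<le> N f) \<and>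
     \<comment> \<open>(iii) Fatou property\<close>
     (\<forall>F f. (\<forall>m. F m \<in> borel_measurable lebesgue) \<longrightarrow> f \<in> borel_measurable lebesgue \<longrightarrow>
         (AE x in lebesgue. (\<forall>m. 0 \<le> F m x \<and> F m x \<le> F (Suc m) x) \<and> (\<lambda>m. F m x) \<longlonglongrightarrow> f x) \<longrightarrow>
         (\<lambda>m. N (F m)) \<longlonglongrightarrow> N f) \<and>
     \<comment> \<open>(iv)\<close>
     (\<forall>B\<in>dil_balls A \<Delta>. N (indicator B) < \<infinity>)"

text \<open>Concavity. (Families with pointwise divergent sum are excluded.)\<close>
definition concave_QBFS :: "((real^'n \<Rightarrow> real) \<Rightarrow> ennreal) \<Rightarrow> bool" where
  "concave_QBFS N \<longleftrightarrow> (\<exists>C>0. \<forall>F::nat \<Rightarrow> real^'n \<Rightarrow> real.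
      (\<forall>k. F k \<in> borel_measurable lebesgue) \<longrightarrow> (\<forall>x. summable (\<lambda>k. \<bar>F k x\<bar>)) \<longrightarrow>
      (\<Sum>k. N (F k)) \<le> ennreal C * N (\<lambda>x. \<Sum>k. \<bar>F k x\<bar>))"

definition monomial_fun :: "('n::finite \<Rightarrow> nat) \<Rightarrow> real^'n \<Rightarrow> real" where
  "monomial_fun \<alpha> x = (\<Prod>i\<in>UNIV. (x $ i) ^ \<alpha> i)"

definition poly_fun :: "nat \<Rightarrow> (real^'n::finite \<Rightarrow> real) set" where
  "poly_fun d = {P. \<exists>c::('n \<Rightarrow> nat) \<Rightarrow> real.
      P = (\<lambda>x. \<Sum>\<alpha>\<in>{\<alpha>. sum \<alpha> UNIV \<le> d}. c \<alpha> * monomial_fun \<alpha> x)}"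

definition poly_proj :: "nat \<Rightarrow> (real^'n::finite) set \<Rightarrow> (real^'n \<Rightarrow> real) \<Rightarrow> real^'n \<Rightarrow> real" where
  "poly_proj d B g = (THE P. P \<in> poly_fun d \<and>
      (\<forall>h\<in>poly_fun d. (LINT x:B|lebesgue. (g x - P x) * h x) = 0))"

definition Lq_loc :: "real \<Rightarrow> (real^'n::finite \<Rightarrow> real) set" where
  "Lq_loc q = {f \<in> borel_measurable lebesgue. \<forall>K. compact K \<longrightarrow>
      (\<integral>\<^sup>+x\<in>K. ennreal (\<bar>f x\<bar> powr q) \<partial>lebesgue) < \<infinity>}"

definition nX :: "((real^'n::finite \<Rightarrow> real) \<Rightarrow> ennreal) \<Rightarrow> (real^'n) set \<Rightarrow> real" where
  "nX N B = enn2real (N (indicator B))"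

definition osc_q :: "real \<Rightarrow> nat \<Rightarrow> (real^'n::finite) set \<Rightarrow> (real^'n \<Rightarrow> real) \<Rightarrow> real" where
  "osc_q q d B f = ((1 / measure lebesgue B) *
      enn2real (\<integral>\<^sup>+x\<in>B. ennreal (\<bar>f x - poly_proj d B f x\<bar> powr q) \<partial>lebesgue)) powr (1 / q)"

definition L_norm :: "((real^'n::finite \<Rightarrow> real) \<Rightarrow> ennreal) \<Rightarrow> real^'n^'n \<Rightarrow> (real^'n) set
    \<Rightarrow> real \<Rightarrow> nat \<Rightarrow> (real^'n \<Rightarrow> real) \<Rightarrow> ennreal" where
  "L_norm N A \<Delta> q d f = (SUP B\<in>dil_balls A \<Delta>. ennreal (measure lebesgue B / nX N B * osc_q q d B f))"

definition Ls_norm :: "((real^'n::finite \<Rightarrow> real) \<Rightarrow> ennreal) \<Rightarrow> real^'n^'n \<Rightarrow> (real^'n) set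
    \<Rightarrow> real \<Rightarrow> nat \<Rightarrow> real \<Rightarrow> (real^'n \<Rightarrow> real) \<Rightarrow> ennreal" where
  "Ls_norm N A \<Delta> q d s f =
    (SUP (m, B, lam)\<in>{(m, B, lam). 1 \<le> (m::nat) \<and> (\<forall>i<m. B i \<in> dil_balls A \<Delta>) \<and>
                          (\<forall>i<m. 0 \<le> (lam i::real)) \<and> (\<Sum>i<m. lam i) \<noteq> 0}.
       ennreal ((\<Sum>j<m. lam j * measure lebesgue (B j) / nX N (B j) * osc_q q d (B j) f) /
         enn2real (N (\<lambda>x. (\<Sum>i<m. (lam i / nX N (B i)) powr s * indicator (B i) x) powr (1 / s)))))"

definition L_space where
  "L_space N A \<Delta> q d = {f \<in> Lq_loc q. L_norm N A \<Delta> q d f < \<infinity>}"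

definition Ls_space where
  "Ls_space N A \<Delta> q d s = {f \<in> Lq_loc q. Ls_norm N A \<Delta> q d s f < \<infinity>}"

end

theory Submission imports Defs begin

lemma matimg_sets:
  fixes M :: "real^'n^'n"
  assumes "S \<in> sets lebesgue"
  shows "(\<lambda>y. M *v y) ` S \<in> sets lebesgue"
  by (rule differentiable_image_in_sets_lebesgue[OF assms])
     (auto intro!: linear_imp_differentiable_on matrix_vector_mul_linear)

lemma funpow_img_sets:
  fixes M :: "real^'n^'n"
  assumes "S \<in> sets lebesgue"
  shows "((\<lambda>y. M *v y) ^^ k) ` S \<in> sets lebesgue"
proof (induction k)
  case 0 then show ?case using assms by simp
next
  case (Suc k)
  have "((\<lambda>y. M *v y) ^^ Suc k) ` S = (\<lambda>y. M *v y) ` (((\<lambda>y. M *v y) ^^ k) ` S)"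
    by (simp add: image_comp)
  then show ?case using matimg_sets[OF Suc] by simp
qed

lemma dil_ball_sets:
  fixes A :: "real^'n^'n"
  assumes "origin_ellipsoid \<Delta>" and "B \<in> dil_balls A \<Delta>"
  shows "B \<in> sets lebesgue"
proof -
  obtain P :: "real^'n^'n" where P: "\<Delta> = (\<lambda>y. P *v y) ` ball 0 1"
    using assms(1) unfolding origin_ellipsoid_def by blast
  have D: "\<Delta> \<in> sets lebesgue" unfolding P by (rule matimg_sets) simp
  obtain x k where B: "B = (\<lambda>y. x + y) ` matpow_image A k \<Delta>"
    using assms(2) unfolding dil_balls_def by blast
  have "matpow_image A k \<Delta> \<in> sets lebesgue"
    unfolding matpow_image_def using funpow_img_sets[OF D] by simp
  then show ?thesis unfolding B by (rule lebesgue_sets_translation)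
qed

lemma powr_sum_ge:
  fixes a :: "'i \<Rightarrow> real"
  assumes "finite I" "\<And>i. i \<in> I \<Longrightarrow> 0 \<le> a i" "0 < s" "s \<le> 1"
  shows "(\<Sum>i\<in>I. a i) \<le> (\<Sum>i\<in>I. a i powr s) powr (1/s)"
proof -
  define S where "S = (\<Sum>i\<in>I. a i)"
  have S0: "0 \<le> S" unfolding S_def using assms(2) by (simp add: sum_nonneg)
  show ?thesis
  proof (cases "S = 0")
    case True then show ?thesis unfolding S_def[symmetric] by simp
  next
    case False
    then have Sp: "0 < S" using S0 by simp
    have le: "a i \<le> S" if "i \<in> I" for i
      unfolding S_def by (rule member_le_sum[OF that]) (use assms in auto)
    have "a i / S \<le> (a i / S) powr s" if "i \<in> I" for i
    proof -
      have "0 \<le> a i / S" "a i / S \<le> 1" using assms(2)[OF that] le[OF that] Sp by auto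
      then show ?thesis using assms(3,4)
              proof -
        assume h: "0 \<le> a i / S" "a i / S \<le> 1" "0 < s" "s \<le> 1"
        have "(a i / S) powr 1 \<le> (a i / S) powr s" using h by (intro powr_mono') auto
        then show ?thesis using h(1) by (simp only: powr_one)
      qed
    qed
    then have "a i powr s = (a i / S) powr s * S powr s" if "i \<in> I" for i
      using assms(2)[OF that] Sp by (simp add: powr_divide)
    have "S powr s = (\<Sum>i\<in>I. a i / S) * S powr s"
      using Sp unfolding S_def by (simp add: sum_divide_distrib[symmetric])
    also have "\<dots> \<le> (\<Sum>i\<in>I. (a i / S) powr s) * S powr s"
      by (intro mult_right_mono sum_mono) (auto intro: \<open>\<And>i. i \<in> I \<Longrightarrow> a i / S \<le> (a i / S) powr s\<close>)
    also have "\<dots> = (\<Sum>i\<in>I. a i powr s)"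
      by (simp add: sum_distrib_right \<open>\<And>i. i \<in> I \<Longrightarrow> a i powr s = (a i / S) powr s * S powr s\<close>)
    finally have "S powr s \<le> (\<Sum>i\<in>I. a i powr s)" .
    then have "(S powr s) powr (1/s) \<le> (\<Sum>i\<in>I. a i powr s) powr (1/s)"
      using assms(3) by (intro powr_mono2) auto
    then show ?thesis using Sp assms(3) unfolding S_def[symmetric] by (simp add: powr_powr)
  qed
qed

theorem proposition3p9:
  fixes A :: "real^'n^'n" and \<Delta> :: "(real^'n) set"
    and N :: "(real^'n \<Rightarrow> real) \<Rightarrow> ennreal"
    and r q s :: real and d :: nat
  assumes "dilation A"
    and "origin_ellipsoid \<Delta>" and "emeasure lebesgue \<Delta> = 1"
    and "1 < r" and "\<Delta> \<subseteq> (\<lambda>y. r *\<^sub>R y) ` \<Delta>" and "(\<lambda>y. r *\<^sub>R y) ` \<Delta> \<subseteq> (\<lambda>y. A *v y) ` \<Delta>"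
    and "ball_QBFS A \<Delta> N" and "concave_QBFS N"
    and "1 \<le> q" and "0 < s" and "s \<le> 1"
  shows "Ls_space N A \<Delta> q d s = L_space N A \<Delta> q d \<and>
    (\<exists>C>0. \<forall>f\<in>Lq_loc q.
        Ls_norm N A \<Delta> q d s f \<le> ennreal C * L_norm N A \<Delta> q d f \<and>
        L_norm N A \<Delta> q d f \<le> ennreal C * Ls_norm N A \<Delta> q d s f)"
proof -
  note s0 = \<open>0 < s\<close> and s1 = \<open>s \<le> 1\<close>
  have hom: "\<And>f c. f \<in> borel_measurable lebesgue \<Longrightarrow> N (\<lambda>x. c * f x) = ennreal \<bar>c\<bar> * N f"
    using assms(7) unfolding ball_QBFS_def by blast
  have mono: "\<And>f g. f \<in> borel_measurable lebesgue \<Longrightarrow> g \<in> borel_measurable lebesgue \<Longrightarrow>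
         (AE x in lebesgue. \<bar>g x\<bar> \<le> \<bar>f x\<bar>) \<Longrightarrow> N g \<le> N f"
    using assms(7) unfolding ball_QBFS_def by blast
  have finN: "\<And>B. B \<in> dil_balls A \<Delta> \<Longrightarrow> N (indicator B) < \<infinity>"
    using assms(7) unfolding ball_QBFS_def by blast
  have meas: "\<And>B. B \<in> dil_balls A \<Delta> \<Longrightarrow> B \<in> sets lebesgue"
    using dil_ball_sets[OF assms(2)] by blast
  have Nind: "N (indicator B) = ennreal (nX N B)" if "B \<in> dil_balls A \<Delta>" for B
    using finN[OF that] unfolding nX_def by (simp add: ennreal_enn2real less_top)
  have nX0: "0 \<le> nX N B" for B unfolding nX_def by simp
  have osc0: "0 \<le> osc_q q d B f" for B f unfolding osc_q_def by simp
  obtain Cc where Cc: "Cc > 0" and conc: "\<And>F::nat \<Rightarrow> real^'n \<Rightarrow> real.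
      (\<forall>k. F k \<in> borel_measurable lebesgue) \<Longrightarrow> (\<forall>x. summable (\<lambda>k. \<bar>F k x\<bar>)) \<Longrightarrow>
      (\<Sum>k. N (F k)) \<le> ennreal Cc * N (\<lambda>x. \<Sum>k. \<bar>F k x\<bar>)"
    using assms(8) unfolding concave_QBFS_def by blast
  have N0: "N (\<lambda>x. 0) = 0"
  proof -
    have "N (\<lambda>x. 0 * (0::real)) = ennreal \<bar>0\<bar> * N (\<lambda>x. 0)" by (rule hom) simp
    then show ?thesis by simp
  qed

  have step1: "L_norm N A \<Delta> q d f \<le> Ls_norm N A \<Delta> q d s f" for f
    unfolding L_norm_def
  proof (rule SUP_least)
    fix B assume B: "B \<in> dil_balls A \<Delta>"
    show "ennreal (measure lebesgue B / nX N B * osc_q q d B f) \<le> Ls_norm N A \<Delta> q d s f"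
    proof (cases "nX N B = 0")
      case True then show ?thesis by simp
    next
      case False
      then have pos: "0 < nX N B" using nX0[of B] by simp
      have fun_eq: "(\<lambda>x. (\<Sum>i<1::nat. ((\<lambda>_. 1::real) i / nX N ((\<lambda>_. B) i)) powr s * indicator ((\<lambda>_. B) i) x) powr (1 / s))
          = (\<lambda>x. (1 / nX N B) * indicator B x)"
      proof
        fix x
        show "(\<Sum>i<1::nat. ((\<lambda>_. 1::real) i / nX N ((\<lambda>_. B) i)) powr s * indicator ((\<lambda>_. B) i) x) powr (1 / s)
           = (1 / nX N B) * indicator B x"
          using pos s0 by (cases "x \<in> B") (simp_all add: powr_powr)
      qed
      have "N (\<lambda>x. (1 / nX N B) * indicator B x) = ennreal (1 / nX N B) * ennreal (nX N B)"
        using hom[of "indicator B" "1 / nX N B"] meas[OF B] Nind[OF B] pos by simp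
      also have "\<dots> = 1" using pos by (simp flip: ennreal_mult)
      finally have den: "N (\<lambda>x. (1 / nX N B) * indicator B x) = 1" .
      have "ennreal (measure lebesgue B / nX N B * osc_q q d B f) =
        (\<lambda>(m, B, lam). ennreal ((\<Sum>j<m. lam j * measure lebesgue (B j) / nX N (B j) * osc_q q d (B j) f) /
         enn2real (N (\<lambda>x. (\<Sum>i<m. (lam i / nX N (B i)) powr s * indicator (B i) x) powr (1 / s))))) (1::nat, (\<lambda>_. B), (\<lambda>_. 1::real))"
        by (simp only: fun_eq case_prod_conv den) simp
      also have "\<dots> \<le> Ls_norm N A \<Delta> q d s f"
        unfolding Ls_norm_def by (rule SUP_upper) (use B in auto)
      finally show ?thesis .
    qed
  qed
  have step2: "Ls_norm N A \<Delta> q d s f \<le> ennreal Cc * L_norm N A \<Delta> q d f" for f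
  proof (cases "L_norm N A \<Delta> q d f = top")
    case True then show ?thesis using Cc by (simp add: ennreal_mult_top)
  next
    case False
    define Lr where "Lr = enn2real (L_norm N A \<Delta> q d f)"
    have Lr0: "0 \<le> Lr" unfolding Lr_def by simp
    have LE: "L_norm N A \<Delta> q d f = ennreal Lr" unfolding Lr_def using False by (simp add: ennreal_enn2real less_top)
    have trm: "measure lebesgue B / nX N B * osc_q q d B f \<le> Lr" if B: "B \<in> dil_balls A \<Delta>" for B
    proof -
      have "ennreal (measure lebesgue B / nX N B * osc_q q d B f) \<le> L_norm N A \<Delta> q d f"
        unfolding L_norm_def by (rule SUP_upper[OF B])
      then show ?thesis using LE Lr0 by simp
    qed
    show ?thesis unfolding Ls_norm_def
    proof (rule SUP_least, clarify)
      fix m :: nat and B :: "nat \<Rightarrow> (real^'n) set" and lam :: "nat \<Rightarrow> real"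
      assume m: "1 \<le> m" and B: "\<forall>i<m. B i \<in> dil_balls A \<Delta>" and lam: "\<forall>i<m. 0 \<le> lam i"
        and "(\<Sum>i<m. lam i) \<noteq> 0"
      define c where "c i = lam i / nX N (B i)" for i
      define \<mu> where "\<mu> i = c i * nX N (B i)" for i
      define num where "num = (\<Sum>j<m. lam j * measure lebesgue (B j) / nX N (B j) * osc_q q d (B j) f)"
      define g where "g = (\<lambda>x. (\<Sum>i<m. (lam i / nX N (B i)) powr s * indicator (B i) x) powr (1 / s))"
      define h where "h = (\<lambda>x. \<Sum>i<m. c i * indicator (B i) x)"
      define D where "D = enn2real (N g)"
      have c0: "i < m \<Longrightarrow> 0 \<le> c i" for i using lam nX0 unfolding c_def by simp
      have mu0: "i < m \<Longrightarrow> 0 \<le> \<mu> i" for i using c0 nX0 unfolding \<mu>_def by simp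
      have D0: "0 \<le> D" unfolding D_def by simp
      have numle: "num \<le> Lr * (\<Sum>i<m. \<mu> i)"
        unfolding num_def sum_distrib_left
      proof (rule sum_mono)
        fix j assume j: "j \<in> {..<m}"
        show "lam j * measure lebesgue (B j) / nX N (B j) * osc_q q d (B j) f \<le> Lr * \<mu> j"
        proof (cases "nX N (B j) = 0")
          case True then show ?thesis unfolding \<mu>_def by simp
        next
          case False
          have "lam j * measure lebesgue (B j) / nX N (B j) * osc_q q d (B j) f
              = lam j * (measure lebesgue (B j) / nX N (B j) * osc_q q d (B j) f)" by simp
          also have "\<dots> \<le> lam j * Lr" using trm[of "B j"] B lam j by (intro mult_left_mono) auto
          finally show ?thesis using False unfolding \<mu>_def c_def by (simp add: mult.commute)
        qed
      qed
      define F where "F k x = (if k < m then c k * indicator (B k) x else 0)" for k x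
      have Fmeas: "\<forall>k. F k \<in> borel_measurable lebesgue"
      proof
        fix k show "F k \<in> borel_measurable lebesgue"
        proof (cases "k < m")
          case True
          then have "F k = (\<lambda>x. c k * indicator (B k) x)" unfolding F_def by auto
          then show ?thesis using meas B True by simp
        next
          case False
          then have "F k = (\<lambda>x. 0)" unfolding F_def by auto
          then show ?thesis by simp
        qed
      qed
      have Fsum: "(\<lambda>k. \<bar>F k x\<bar>) sums (\<Sum>k<m. \<bar>F k x\<bar>)" for x
        by (rule sums_finite) (auto simp: F_def)
      have "(\<Sum>k. N (F k)) \<le> ennreal Cc * N (\<lambda>x. \<Sum>k. \<bar>F k x\<bar>)"
        by (rule conc[OF Fmeas]) (use Fsum sums_summable in blast)
      moreover have "(\<lambda>x. \<Sum>k. \<bar>F k x\<bar>) = h"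
      proof
        fix x
        have "(\<Sum>k. \<bar>F k x\<bar>) = (\<Sum>k<m. \<bar>F k x\<bar>)" using sums_unique[OF Fsum] by simp
        also have "\<dots> = h x" unfolding h_def F_def using c0 by (intro sum.cong) auto
        finally show "(\<Sum>k. \<bar>F k x\<bar>) = h x" .
      qed
      moreover have "(\<Sum>k. N (F k)) = ennreal (\<Sum>i<m. \<mu> i)"
      proof -
        have NF: "N (F k) = ennreal (\<mu> k)" if "k < m" for k
        proof -
          have "F k = (\<lambda>x. c k * indicator (B k) x)" unfolding F_def using that by auto
          then have "N (F k) = ennreal (c k) * ennreal (nX N (B k))"
            using hom[of "indicator (B k)" "c k"] meas B that Nind c0 by simp
          then show ?thesis unfolding \<mu>_def using c0[OF that] nX0 by (simp add: ennreal_mult)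
        qed
        have "(\<Sum>k. N (F k)) = (\<Sum>k<m. N (F k))"
          by (rule suminf_finite) (auto simp: F_def[abs_def] N0)
        also have "\<dots> = (\<Sum>k<m. ennreal (\<mu> k))" using NF by simp
        also have "\<dots> = ennreal (\<Sum>i<m. \<mu> i)" by (rule sum_ennreal) (use mu0 in auto)
        finally show ?thesis .
      qed
      ultimately have muN: "ennreal (\<Sum>i<m. \<mu> i) \<le> ennreal Cc * N h" by simp
      have hmeas: "h \<in> borel_measurable lebesgue"
        unfolding h_def using meas B by (intro borel_measurable_sum) simp
      have gmeas: "g \<in> borel_measurable lebesgue"
      proof -
        have "(\<lambda>x. \<Sum>i<m. (lam i / nX N (B i)) powr s * indicator (B i) x) \<in> borel_measurable lebesgue"
          using meas B by (intro borel_measurable_sum) simp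
        then show ?thesis unfolding g_def by measurable
      qed
      have hg: "\<bar>h x\<bar> \<le> \<bar>g x\<bar>" for x
      proof -
        have "h x = (\<Sum>i<m. c i * indicator (B i) x)" unfolding h_def ..
        also have "\<dots> \<le> (\<Sum>i<m. (c i * indicator (B i) x) powr s) powr (1/s)"
          using c0 s0 s1 by (intro powr_sum_ge) auto
        also have "\<dots> = g x" unfolding g_def c_def
          by (intro arg_cong2[where f="(powr)"] sum.cong refl) (simp add: indicator_def)
        finally have hle: "h x \<le> g x" .
        have "0 \<le> h x" unfolding h_def using c0 by (intro sum_nonneg) simp
        then show ?thesis using hle by simp
      qed
      have Nhg: "N h \<le> N g" by (rule mono[OF gmeas hmeas]) (use hg in simp)
      show "ennreal (num / D) \<le> ennreal Cc * L_norm N A \<Delta> q d f"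
        unfolding num_def[symmetric] g_def[symmetric] D_def[symmetric]
      proof (cases "N g = top")
        case True then have "D = 0" unfolding D_def by simp
        then show ?thesis by simp
      next
        case False
        then have NgD: "N g = ennreal D" unfolding D_def by (simp add: ennreal_enn2real less_top)
        have "ennreal Cc * N h \<le> ennreal Cc * N g" by (rule mult_left_mono[OF Nhg]) simp
        also have "\<dots> = ennreal (Cc * D)" using NgD Cc D0 by (simp add: ennreal_mult)
        finally have "ennreal (\<Sum>i<m. \<mu> i) \<le> ennreal (Cc * D)" using muN by (rule order_trans[rotated])
        then have muD: "(\<Sum>i<m. \<mu> i) \<le> Cc * D" using Cc D0 by simp
        have "num / D \<le> Cc * Lr"
        proof (cases "D = 0")
          case True then show ?thesis using Cc Lr0 by simp
        next
          case False
          have "num \<le> Lr * (Cc * D)" using numle mult_left_mono[OF muD Lr0] by (rule order_trans)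
          then show ?thesis using False D0 by (simp add: divide_le_eq mult_ac)
        qed
        then show ?thesis unfolding LE using Cc Lr0 by (simp add: ennreal_mult[symmetric] ennreal_leI)
      qed
    qed
  qed
  define C where "C = max 1 Cc"
  have C0: "C > 0" and C1: "1 \<le> C" and CC: "Cc \<le> C" unfolding C_def by auto
  have both: "Ls_norm N A \<Delta> q d s f \<le> ennreal C * L_norm N A \<Delta> q d f \<and>
        L_norm N A \<Delta> q d f \<le> ennreal C * Ls_norm N A \<Delta> q d s f" for f
  proof
    show "Ls_norm N A \<Delta> q d s f \<le> ennreal C * L_norm N A \<Delta> q d f"
      using step2[of f] mult_right_mono[OF ennreal_leI[OF CC] zero_le, of "L_norm N A \<Delta> q d f"] by (rule order_trans)
    have "L_norm N A \<Delta> q d f \<le> 1 * Ls_norm N A \<Delta> q d s f" using step1 by simp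
    also have "\<dots> \<le> ennreal C * Ls_norm N A \<Delta> q d s f"
      using C1 by (intro mult_right_mono) (auto simp: ennreal_1[symmetric] simp del: ennreal_1 intro: ennreal_leI)
    finally show "L_norm N A \<Delta> q d f \<le> ennreal C * Ls_norm N A \<Delta> q d s f" .
  qed
  have spaces: "Ls_space N A \<Delta> q d s = L_space N A \<Delta> q d"
    unfolding Ls_space_def L_space_def
  proof (intro Collect_cong conj_cong refl)
    fix f
    show "(Ls_norm N A \<Delta> q d s f < \<infinity>) = (L_norm N A \<Delta> q d f < \<infinity>)"
    proof
      assume "Ls_norm N A \<Delta> q d s f < \<infinity>"
      then have "ennreal C * Ls_norm N A \<Delta> q d s f < \<infinity>" by (simp add: ennreal_mult_less_top)
      then show "L_norm N A \<Delta> q d f < \<infinity>" using both[of f, THEN conjunct2] by (rule le_less_trans[rotated])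
    next
      assume "L_norm N A \<Delta> q d f < \<infinity>"
      then have "ennreal C * L_norm N A \<Delta> q d f < \<infinity>" by (simp add: ennreal_mult_less_top)
      then show "Ls_norm N A \<Delta> q d s f < \<infinity>" using both[of f, THEN conjunct1] by (rule le_less_trans[rotated])
    qed
  qed
  show ?thesis using spaces both C0 by blast
qed
end
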